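(* Let $J=(-\epsilon,\epsilon)$ and let $\Phi:\mathbb{R}^{n-1}\times J\to\mathbb{R}^n$, $\Phi(x;t)=(y_1(x;t),\dots,y_n(x;t))$, be an orientation-preserving $C^2$ diffeomorphism onto a domain $\Omega\subset\mathbb{R}^n$. For $t\in J$ let $\Gamma_t:\mathbb{R}^{n-1}\to\mathbb{R}^n$ be the parametrized hypersurface $x\mapsto\Phi(x;t)$. Let \[ \mathbf{n}=(-1)^{n-1}\det\begin{bmatrix}\mathbf{e}_1 & \frac{\partial y_1}{\partial x_1} & \cdots & \frac{\partial y_1}{\partial x_{n-1}}\\ \vdots & \vdots & & \vdots\\ \mathbf{e}_n & \frac{\partial y_n}{\partial x_1} & \cdots & \frac{\partial y_n}{\partial x_{n-1}}\end{bmatrix} \] (the Hodge dual of $\partial\Phi/\partial x_1\wedge\cdots\wedge\partial\Phi/\partial x_{n-1}$), and set $\varphi=\det d\Phi/\|\mathbf{n}\|$ and $\mathbf{N}=\mathbf{n}/\|\mathbf{n}\|$. Orient each $\Gamma_t$ by $\mathbf{N}$, and for $p\in\Omega$ let $H(p)$ be the mean curvature at $p$ of the oriented hypersurface $\Gamma_t$ containing $p$. Let $s$ be the arc-length parameter (modulo an additive constant) along the integral curves of $\mathbf{N}$. Then there exists a critical-point-free harmonic function $U$ on $\Omega$ whose family of level sets is $\{\Gamma_t\}_{t\in J}$ if and only if $\frac{\partial\varphi}{\partial s}+(n-1)H\varphi$ is constant on each $\Gamma_t$, i.e. \[ \frac{\partial}{\partial x_i}\left(\frac{\partial\varphi}{\partial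 s}+(n-1)H\varphi\right)=0\quad\text{for } i=1,\dots,n-1. \]
   Context: $\det d\Phi$ is the Jacobian determinant of $\Phi$. Quantities are transported between $\mathbb{R}^{n-1}\times J$ and $\Omega$ via $\Phi$: for $q\in\mathbb{R}^{n-1}\times J$, $(H\varphi)(q)=H(\Phi(q))\varphi(q)$ and $\frac{\partial\varphi}{\partial s}(q)=\frac{d}{ds}\big|_{s=0}\varphi(\Phi^{-1}(\alpha(s)))$ where $\alpha$ is the unit-speed integral curve of $\mathbf{N}$ with $\alpha(0)=\Phi(q)$. Mean curvature convention: at $p$ on a hypersurface oriented by unit normal $\mathbf{N}$, for a unit tangent $\mathbf{v}$ the normal section (intersection with the plane through $p$ spanned by $\mathbf{v},\mathbf{N}(p)$) has signed curvature $\kappa_p(\mathbf{v})=\langle c''(0),\mathbf{N}(p)\rangle$ for its unit-speed parametrization $c$ with $c(0)=p$, $c'(0)=\mathbf{v}$; $H(p)$ is the average of $\kappa_p(\mathbf{v})$ over unit tangent vectors $\mathbf{v}$ (i.e. $\frac1{n-1}$ times the sum of principal curvatures). *)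

theory Defs
  imports "HOL-Analysis.Analysis"
begin

text \<open>Euclidean n-space is modelled as real^('m option), with n - 1 = CARD('m).
  The parameter space R^(n-1) x J is (real^'m) x real restricted to UNIV x J.
  The coordinate x_i of R^(n-1) corresponds to the coordinate Some i of R^n and the
  parameter t to the coordinate None (which plays the role of the last coordinate y_n),
  which fixes the orientation conventions for det dPhi and for the normal n.\<close>

definition pd :: "('a::real_normed_vector \<Rightarrow> 'b::real_normed_vector) \<Rightarrow> 'a \<Rightarrow> 'a \<Rightarrow> 'b" where
  "pd f v q = frechet_derivative f (at q) v"

definition C2_on :: "'a::euclidean_space set \<Rightarrow> ('a \<Rightarrow> 'b::real_normed_vector) \<Rightarrow> bool" where
  "C2_on S f \<longleftrightarrow>
     (\<forall>x\<in>S. f differentiable (at x)) \<and>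
     (\<forall>b\<in>Basis. \<forall>x\<in>S. (pd f b) differentiable (at x)) \<and>
     (\<forall>b\<in>Basis. \<forall>c\<in>Basis. continuous_on S (pd (pd f b) c))"

definition harmonic_on :: "'a::euclidean_space set \<Rightarrow> ('a \<Rightarrow> real) \<Rightarrow> bool" where
  "harmonic_on S U \<longleftrightarrow> C2_on S U \<and> (\<forall>p\<in>S. (\<Sum>b\<in>Basis. pd (pd U b) b p) = 0)"

definition level_sets :: "'a set \<Rightarrow> ('a \<Rightarrow> real) \<Rightarrow> 'a set set" where
  "level_sets S U = {{p\<in>S. U p = c} | c. c \<in> U ` S}"

type_synonym 'm param = "(real^'m) \<times> real"
type_synonym 'm space = "real^('m option)"

definition dx :: "('m::finite param \<Rightarrow> 'm space) \<Rightarrow> 'm \<Rightarrow> 'm param \<Rightarrow> 'm space" where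
  "dx Phi i q = pd Phi (axis i 1, 0) q"

definition dt :: "('m::finite param \<Rightarrow> 'm space) \<Rightarrow> 'm param \<Rightarrow> 'm space" where
  "dt Phi q = pd Phi (0, 1) q"

definition jac_mat :: "('m::finite param \<Rightarrow> 'm space) \<Rightarrow> 'm param \<Rightarrow> real^('m option)^('m option)" where
  "jac_mat Phi q = (\<chi> r c. case c of None \<Rightarrow> dt Phi q $ r | Some i \<Rightarrow> dx Phi i q $ r)"

definition jac_det :: "('m::finite param \<Rightarrow> 'm space) \<Rightarrow> 'm param \<Rightarrow> real" where
  "jac_det Phi q = det (jac_mat Phi q)"

text \<open>The normal n = (-1)^(n-1) det [e | dPhi/dx_1 ... dPhi/dx_(n-1)]
   = det [dPhi/dx_1 ... dPhi/dx_(n-1) | e], i.e. its k-th component is the determinant with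
   the unit vector e_k in the last (None) column.\<close>
definition nvec :: "('m::finite param \<Rightarrow> 'm space) \<Rightarrow> 'm param \<Rightarrow> 'm space" where
  "nvec Phi q = (\<chi> k. det (\<chi> r c. case c of None \<Rightarrow> (if r = k then 1 else 0)
                                          | Some i \<Rightarrow> dx Phi i q $ r))"

definition Nvec :: "('m::finite param \<Rightarrow> 'm space) \<Rightarrow> 'm param \<Rightarrow> 'm space" where
  "Nvec Phi q = nvec Phi q /\<^sub>R norm (nvec Phi q)"

definition phi :: "('m::finite param \<Rightarrow> 'm space) \<Rightarrow> 'm param \<Rightarrow> real" where
  "phi Phi q = jac_det Phi q / norm (nvec Phi q)"

definition first_ff :: "('m::finite param \<Rightarrow> 'm space) \<Rightarrow> 'm param \<Rightarrow> real^'m^'m" where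
  "first_ff Phi q = (\<chi> i j. dx Phi i q \<bullet> dx Phi j q)"

definition second_ff :: "('m::finite param \<Rightarrow> 'm space) \<Rightarrow> 'm param \<Rightarrow> real^'m^'m" where
  "second_ff Phi q = (\<chi> i j. pd (dx Phi j) (axis i 1, 0) q \<bullet> Nvec Phi q)"

definition Hcurv :: "('m::finite param \<Rightarrow> 'm space) \<Rightarrow> 'm param \<Rightarrow> real" where
  "Hcurv Phi q = trace (matrix_inv (first_ff Phi q) ** second_ff Phi q) / real CARD('m)"

text \<open>Derivative of phi with respect to arc length along the integral curves of N,
  phi being transported to Omega = Phi ` D via the inverse of Phi on D:
  the directional derivative of phi o Phi^(-1) at Phi q in direction N(Phi q).\<close>
definition ds_phi :: "'m::finite param set \<Rightarrow> ('m param \<Rightarrow> 'm space) \<Rightarrow> 'm param \<Rightarrow> real" where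
  "ds_phi D Phi q = pd (\<lambda>p. phi Phi (inv_into D Phi p)) (Nvec Phi q) (Phi q)"

end

theory Submission
  imports Defs
begin

lemma trace_swap:
  fixes L :: "'a::euclidean_space \<Rightarrow> 'b::euclidean_space" and M :: "'b \<Rightarrow> 'a"
  assumes "linear L" "linear M"
  shows "(\<Sum>b\<in>Basis. M (L b) \<bullet> b) = (\<Sum>k\<in>Basis. L (M k) \<bullet> k)"
proof -
  have "(\<Sum>b\<in>Basis. M (L b) \<bullet> b) = (\<Sum>b\<in>Basis. \<Sum>k\<in>Basis. (L b \<bullet> k) * (M k \<bullet> b))"
  proof (rule sum.cong[OF refl])
    fix b :: 'a assume "b \<in> Basis"
    have "M (L b) = M (\<Sum>k\<in>Basis. (L b \<bullet> k) *\<^sub>R k)" by (simp add: euclidean_representation)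
    also have "\<dots> = (\<Sum>k\<in>Basis. (L b \<bullet> k) *\<^sub>R M k)"
      using assms(2) by (simp add: linear_sum linear_scale)
    finally show "M (L b) \<bullet> b = (\<Sum>k\<in>Basis. (L b \<bullet> k) * (M k \<bullet> b))"
      by (simp add: inner_sum_left)
  qed
  also have "\<dots> = (\<Sum>k\<in>Basis. \<Sum>b\<in>Basis. (L b \<bullet> k) * (M k \<bullet> b))" by (rule sum.swap)
  also have "\<dots> = (\<Sum>k\<in>Basis. L (M k) \<bullet> k)"
  proof (rule sum.cong[OF refl])
    fix k :: 'b assume "k \<in> Basis"
    have "L (M k) = L (\<Sum>b\<in>Basis. (M k \<bullet> b) *\<^sub>R b)" by (simp add: euclidean_representation)
    also have "\<dots> = (\<Sum>b\<in>Basis. (M k \<bullet> b) *\<^sub>R L b)"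
      using assms(1) by (simp add: linear_sum linear_scale)
    finally show "(\<Sum>b\<in>Basis. (L b \<bullet> k) * (M k \<bullet> b)) = L (M k) \<bullet> k"
      by (simp add: inner_sum_left mult.commute)
  qed
  finally show ?thesis .
qed

lemma deriv_loc_const:
  assumes "(f has_derivative f') (at x)" "open S" "x \<in> S" "\<And>y. y \<in> S \<Longrightarrow> f y = c"
  shows "f' = (\<lambda>_. 0)"
proof -
  have "((\<lambda>_. c) has_derivative (\<lambda>_. 0)) (at x)" by simp
  then have "(f has_derivative (\<lambda>_. 0)) (at x)"
    by (rule has_derivative_transform_within_open[OF _ assms(2,3)]) (use assms(4) in auto)
  then show ?thesis using assms(1) has_derivative_unique by blast
qed

lemma pd_works:
  assumes "f differentiable (at x)"
  shows "(f has_derivative (\<lambda>v. pd f v x)) (at x)"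
  using frechet_derivative_works[of f "at x"] assms unfolding pd_def by simp

lemma pd_eqI:
  assumes "(f has_derivative f') (at x)" shows "pd f v x = f' v"
  using frechet_derivative_at[OF assms] unfolding pd_def by simp

lemma pd_transform:
  assumes "(f has_derivative f') (at x)" "open S" "x \<in> S" "\<And>y. y \<in> S \<Longrightarrow> f y = g y"
  shows "(g has_derivative f') (at x)" "pd g v x = f' v"
proof -
  show 1: "(g has_derivative f') (at x)"
    by (rule has_derivative_transform_within_open[OF assms(1-3)]) (use assms(4) in auto)
  show "pd g v x = f' v" by (rule pd_eqI[OF 1])
qed

lemma sum_Basis_vec:
  fixes F :: "real^'n::finite \<Rightarrow> 'b::comm_monoid_add"
  shows "(\<Sum>b\<in>Basis. F b) = (\<Sum>i\<in>UNIV. F (axis i 1))"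
proof -
  have "Basis = range (\<lambda>i::'n. axis i (1::real))" by (auto simp: Basis_vec_def)
  moreover have "inj (\<lambda>i::'n. axis i (1::real))" by (auto intro!: injI simp: axis_eq_axis)
  ultimately show ?thesis by (metis (no_types, lifting) sum.reindex_cong)
qed

lemma sum_Basis_param:
  fixes F :: "(real^'n::finite) \<times> real \<Rightarrow> 'b::comm_monoid_add"
  shows "(\<Sum>k\<in>Basis. F k) = (\<Sum>i\<in>UNIV. F (axis i 1, 0)) + F (0, 1)"
proof -
  have inj1: "inj_on (\<lambda>u. (u::real^'n, 0::real)) Basis" "inj_on (\<lambda>u. (0::real^'n, u::real)) Basis"
    by (auto intro!: inj_onI)
  have "(\<Sum>k\<in>Basis. F k) = (\<Sum>u\<in>Basis. F (u, 0)) + (\<Sum>v\<in>Basis. F (0, v))"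
    unfolding Basis_prod_def
    by (subst sum.union_disjoint) (auto simp: sum.reindex inj1)
  then show ?thesis by (simp add: sum_Basis_vec[of "\<lambda>u. F (u, 0)"])
qed

lemma det_col_lin:
  fixes C :: "'n::finite \<Rightarrow> real^'n" and v :: "real^'n"
  shows "det (\<chi> r c. if c = k then v$r else C c $ r) =
    (\<Sum>j\<in>UNIV. v$j * det (\<chi> r c. if c = k then (if r = j then 1 else 0) else C c $ r))"
proof -
  have tr: "\<And>w. det ((\<chi> r c. if c = k then w$r else C c $ r) :: real^'n^'n) = det (\<chi> c. if c = k then w else C c)"
  proof -
    fix w :: "real^'n"
    let ?X = "(\<chi> r c. if c = k then w$r else C c $ r) :: real^'n^'n"
    have e: "transpose ?X = (\<chi> c. if c = k then w else C c)"
      by (simp add: transpose_def vec_eq_iff)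
    have "det ?X = det (transpose ?X)" by (rule det_transpose[symmetric])
    also have "\<dots> = det (\<chi> c. if c = k then w else C c)" by (simp only: e)
    finally show "det ?X = det (\<chi> c. if c = k then w else C c)" .
  qed
  have v: "v = (\<Sum>j\<in>UNIV. v$j *s axis j 1)"
    by (rule basis_expansion[symmetric])
  have "det (\<chi> c. if c = k then v else C c) = det (\<chi> c. if c = k then (\<Sum>j\<in>UNIV. v$j *s axis j 1) else C c)"
    by (simp only: basis_expansion)
  also have "\<dots> = (\<Sum>j\<in>UNIV. det (\<chi> c. if c = k then v$j *s axis j 1 else C c))"
    by (rule det_linear_row_sum) simp
  also have "\<dots> = (\<Sum>j\<in>UNIV. v$j * det (\<chi> c. if c = k then axis j 1 else C c))"
    by (simp only: det_row_mul)
  also have "\<dots> = (\<Sum>j\<in>UNIV. v$j * det (\<chi> r c. if c = k then (axis j 1 :: real^'n)$r else C c $ r))"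
    by (simp only: tr vec_lambda_eta)
  also have "\<dots> = (\<Sum>j\<in>UNIV. v$j * det (\<chi> r c. if c = k then (if r = j then 1 else 0) else C c $ r))"
  proof -
    have "\<And>j. ((\<chi> r c. if c = k then (axis j 1 :: real^'n)$r else C c $ r) :: real^'n^'n) = (\<chi> r c. if c = k then (if r = j then 1 else 0) else C c $ r)"
      by (simp add: vec_eq_iff axis_def)
    then show ?thesis by simp
  qed
  finally show ?thesis using tr[of v] by simp
qed

lemma setcompr_elim: "X \<in> {A c | c. c \<in> S} \<Longrightarrow> (\<And>c. c \<in> S \<Longrightarrow> X = A c \<Longrightarrow> P) \<Longrightarrow> P"
  by blast

lemma setcompr_cong: "(\<And>t. t \<in> S \<Longrightarrow> A t = B t) \<Longrightarrow> {A t | t. t \<in> S} = {B t | t. t \<in> S}"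
  by auto metis+

locale S3 =
  fixes Phi :: "(real^'m::finite) \<times> real \<Rightarrow> real^('m option)" and eps :: real
  assumes eps: "eps > 0"
  and C2: "C2_on ((UNIV :: (real^'m) set) \<times> {-eps<..<eps}) Phi"
  and inj: "inj_on Phi ((UNIV :: (real^'m) set) \<times> {-eps<..<eps})"
  and opn: "open (Phi ` ((UNIV :: (real^'m) set) \<times> {-eps<..<eps}))"
  and C2inv: "C2_on (Phi ` ((UNIV :: (real^'m) set) \<times> {-eps<..<eps})) (inv_into ((UNIV :: (real^'m) set) \<times> {-eps<..<eps}) Phi)"
  and orient: "\<forall>q\<in>(UNIV :: (real^'m) set) \<times> {-eps<..<eps}. jac_det Phi q > 0"
begin

abbreviation "J \<equiv> {-eps<..<eps}"
abbreviation "D \<equiv> (UNIV::(real^'m) set) \<times> J"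
abbreviation "Om \<equiv> Phi ` D"
abbreviation "Psi \<equiv> inv_into D Phi"
definition "A q = frechet_derivative Phi (at q)"
definition "L p = frechet_derivative Psi (at p)"
definition "V p = (\<Sum>b\<in>Basis. snd (pd Psi b p) *\<^sub>R b)"
definition "tau p = snd (Psi p)"

lemma D_open: "open D" by (simp add: open_Times)

lemma PsiPhi: "q \<in> D \<Longrightarrow> Psi (Phi q) = q"
  using inj by (simp add: inv_into_f_f)

lemma PhiPsi: "p \<in> Om \<Longrightarrow> Psi p \<in> D" "p \<in> Om \<Longrightarrow> Phi (Psi p) = p"
  by (auto simp: inv_into_into f_inv_into_f)

lemma Phi_Om: "q \<in> D \<Longrightarrow> Phi q \<in> Om" by simp

lemma Phi_der: "q \<in> D \<Longrightarrow> (Phi has_derivative A q) (at q)"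
  using C2 unfolding C2_on_def A_def by (auto intro: frechet_derivative_works[THEN iffD1])

lemma Psi_der: "p \<in> Om \<Longrightarrow> (Psi has_derivative L p) (at p)"
  using C2inv unfolding C2_on_def L_def by (auto intro: frechet_derivative_works[THEN iffD1])

lemma linA: "q \<in> D \<Longrightarrow> linear (A q)"
  using Phi_der has_derivative_linear by blast

lemma linL: "p \<in> Om \<Longrightarrow> linear (L p)"
  using Psi_der has_derivative_linear by blast

lemma LA: assumes "q \<in> D" shows "L (Phi q) (A q v) = v"
proof -
  have "(Psi \<circ> Phi has_derivative (L (Phi q) \<circ> A q)) (at q)"
    by (rule diff_chain_at[OF Phi_der[OF assms] Psi_der]) (use assms in simp)
  then have "(id has_derivative (L (Phi q) \<circ> A q)) (at q)"
    by (rule has_derivative_transform_within_open[OF _ D_open assms]) (simp add: PsiPhi)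
  moreover have "(id has_derivative id) (at q)" by (simp add: has_derivative_id)
  ultimately have "L (Phi q) \<circ> A q = id" using has_derivative_unique by blast
  then show ?thesis by (metis comp_apply id_apply)
qed

lemma AL: assumes "p \<in> Om" shows "A (Psi p) (L p w) = w"
proof -
  have "(Phi \<circ> Psi has_derivative (A (Psi p) \<circ> L p)) (at p)"
    by (rule diff_chain_at[OF Psi_der[OF assms] Phi_der[OF PhiPsi(1)[OF assms]]])
  then have "(id has_derivative (A (Psi p) \<circ> L p)) (at p)"
    by (rule has_derivative_transform_within_open[OF _ opn assms]) (simp add: PhiPsi)
  moreover have "(id has_derivative id) (at p)" by (simp add: has_derivative_id)
  ultimately have "A (Psi p) \<circ> L p = id" using has_derivative_unique by blast
  then show ?thesis by (metis comp_apply id_apply)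
qed

lemma AL': assumes "q \<in> D" shows "A q (L (Phi q) w) = w"
  using AL[OF Phi_Om[OF assms]] PsiPhi[OF assms] by simp

lemma dx_A: "dx Phi i q = A q (axis i 1, 0)"
  by (simp add: dx_def pd_def A_def)

lemma dt_A: "dt Phi q = A q (0, 1)"
  by (simp add: dt_def pd_def A_def)

lemma pdPsi: "pd Psi b p = L p b" by (simp add: pd_def L_def)

lemma Vdot: assumes "p \<in> Om" shows "V p \<bullet> w = snd (L p w)"
proof -
  have "snd (L p w) = snd (L p (\<Sum>b\<in>Basis. (w \<bullet> b) *\<^sub>R b))" by (simp add: euclidean_representation)
  also have "\<dots> = snd (\<Sum>b\<in>Basis. (w \<bullet> b) *\<^sub>R L p b)"
    using linL[OF assms] by (simp add: linear_sum linear_scale)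
  also have "\<dots> = (\<Sum>b\<in>Basis. (w \<bullet> b) * snd (L p b))" by (simp add: snd_sum)
  also have "\<dots> = V p \<bullet> w" unfolding V_def pdPsi inner_sum_left
    by (rule sum.cong[OF refl]) (simp add: inner_commute)
  finally show ?thesis by simp
qed

lemma WA: assumes "q \<in> D" shows "V (Phi q) \<bullet> A q v = snd v"
  using Vdot[OF Phi_Om[OF assms]] LA[OF assms] by simp

lemma V_ne: assumes "p \<in> Om" shows "V p \<noteq> 0"
proof -
  have "V (Phi (Psi p)) \<bullet> A (Psi p) (0,1) = 1" using WA[OF PhiPsi(1)[OF assms]] by simp
  then show ?thesis using PhiPsi(2)[OF assms] by auto
qed

lemma nvec_dot: "nvec Phi q \<bullet> v = det (\<chi> r c. if c = None then v$r else dx Phi (the c) q $ r)"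
proof -
  have "nvec Phi q \<bullet> v = (\<Sum>j\<in>UNIV. v$j * nvec Phi q $ j)"
    by (simp add: inner_vec_def mult.commute)
  also have "\<dots> = (\<Sum>j\<in>UNIV. v$j * det (\<chi> r c. if c = None then (if r = j then 1 else 0) else dx Phi (the c) q $ r))"
    by (simp add: nvec_def option.case_eq_if)
  also have "\<dots> = det (\<chi> r c. if c = None then v$r else dx Phi (the c) q $ r)"
    by (rule det_col_lin[of None v "\<lambda>c. dx Phi (the c) q", symmetric])
  finally show ?thesis .
qed

lemma nvec_dx: "nvec Phi q \<bullet> dx Phi i q = 0"
  unfolding nvec_dot
  by (rule det_identical_columns[of None "Some i"]) (auto simp: column_def vec_eq_iff)

lemma nvec_dt: "nvec Phi q \<bullet> dt Phi q = jac_det Phi q"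
  unfolding nvec_dot jac_det_def jac_mat_def
  by (rule arg_cong[where f=det]) (simp add: vec_eq_iff split: option.split)

lemma basis_param_cases:
  assumes "k \<in> (Basis :: ((real^'m) \<times> real) set)"
  shows "(\<exists>i. k = (axis i 1, 0)) \<or> k = (0, 1)"
  using assms by (auto simp: Basis_prod_def Basis_vec_def)

lemma A_expand: assumes "q \<in> D" shows "d \<bullet> A q v = (\<Sum>k\<in>Basis. (v \<bullet> k) * (d \<bullet> A q k))"
proof -
  have "A q v = A q (\<Sum>k\<in>Basis. (v \<bullet> k) *\<^sub>R k)" by (simp add: euclidean_representation)
  also have "\<dots> = (\<Sum>k\<in>Basis. (v \<bullet> k) *\<^sub>R A q k)"
    using linA[OF assms] by (simp add: linear_sum linear_scale)
  finally show ?thesis by (simp add: inner_sum_right)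
qed

lemma nvec_eq: assumes "q \<in> D" shows "nvec Phi q = jac_det Phi q *\<^sub>R V (Phi q)"
proof -
  define d where "d = nvec Phi q - jac_det Phi q *\<^sub>R V (Phi q)"
  have dk: "d \<bullet> A q k = 0" if "k \<in> Basis" for k
    using basis_param_cases[OF that]
  proof
    assume "\<exists>i. k = (axis i 1, 0)"
    then obtain i where k: "k = (axis i 1, 0)" by blast
    show ?thesis using nvec_dx[of q i] WA[OF assms, of k]
      by (simp add: d_def k dx_A inner_diff_left)
  next
    assume k: "k = (0, 1)"
    show ?thesis using nvec_dt[of q] WA[OF assms, of k]
      by (simp add: d_def k dt_A inner_diff_left)
  qed
  have "d \<bullet> A q v = 0" for v
    unfolding A_expand[OF assms, of d v] by (simp add: dk)
  from this[of "L (Phi q) d"] have "d \<bullet> d = 0" by (simp add: AL'[OF assms])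
  then show ?thesis by (simp add: d_def)
qed

lemma jd_pos: "q \<in> D \<Longrightarrow> jac_det Phi q > 0" using orient by blast

lemma Nvec_eq: assumes "q \<in> D" shows "Nvec Phi q = V (Phi q) /\<^sub>R norm (V (Phi q))"
  using jd_pos[OF assms] by (simp add: Nvec_def nvec_eq[OF assms])

lemma phi_eq: assumes "q \<in> D" shows "phi Phi q = 1 / norm (V (Phi q))"
  using jd_pos[OF assms] by (simp add: phi_def nvec_eq[OF assms])

definition "DV p c = (\<Sum>b\<in>Basis. snd (pd (pd Psi b) c p) *\<^sub>R b)"
definition "divV p = (\<Sum>b\<in>Basis. DV p b \<bullet> b)"
definition "nu p = V p /\<^sub>R norm (V p)"
definition "Dnu p c = (DV p c - (DV p c \<bullet> nu p) *\<^sub>R nu p) /\<^sub>R norm (V p)"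

lemma V_der: assumes "p \<in> Om" shows "(V has_derivative DV p) (at p)"
proof -
  have "((\<lambda>p. snd (pd Psi b p) *\<^sub>R b) has_derivative (\<lambda>c. snd (pd (pd Psi b) c p) *\<^sub>R b)) (at p)"
    if "b \<in> Basis" for b
  proof -
    have "(pd Psi b has_derivative (\<lambda>c. pd (pd Psi b) c p)) (at p)"
      using C2inv that assms unfolding C2_on_def by (blast intro: pd_works)
    then show ?thesis
      by (intro has_derivative_scaleR_left has_derivative_snd)
  qed
  then show ?thesis unfolding V_def DV_def[abs_def]
    by (intro has_derivative_sum) auto
qed

lemma DV_dot: assumes "b \<in> Basis" shows "DV p c \<bullet> b = snd (pd (pd Psi b) c p)"
  using assms by (simp add: DV_def inner_sum_left inner_Basis if_distrib sum.delta cong: if_cong)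

lemma divV_alt: "divV p = (\<Sum>b\<in>Basis. snd (pd (pd Psi b) b p))"
  by (simp add: divV_def DV_dot)

lemma divV_cont: "continuous_on Om divV"
proof -
  have "continuous_on Om (\<lambda>p. snd (pd (pd Psi b) b p))" if "b \<in> Basis" for b
    using C2inv that unfolding C2_on_def by (blast intro: continuous_on_snd)
  then show ?thesis unfolding divV_alt[abs_def] by (intro continuous_on_sum) auto
qed

lemma V_cont: "continuous_on Om V"
  by (rule continuous_at_imp_continuous_on) (blast intro: has_derivative_continuous V_der)

lemma linDV: "p \<in> Om \<Longrightarrow> linear (DV p)"
  using V_der has_derivative_linear by blast

lemma norm_der: assumes "p \<in> Om"
  shows "((\<lambda>p. norm (V p)) has_derivative (\<lambda>c. DV p c \<bullet> nu p)) (at p)"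
proof -
  have "((\<lambda>p. norm (V p)) has_derivative (\<lambda>c. DV p c \<bullet> sgn (V p))) (at p)"
    using has_derivative_compose[OF V_der[OF assms] has_derivative_norm[OF V_ne[OF assms]]] by simp
  then show ?thesis by (simp add: nu_def sgn_div_norm divide_inverse_commute)
qed

lemma invnorm_der: assumes "p \<in> Om"
  shows "((\<lambda>p. 1 / norm (V p)) has_derivative (\<lambda>c. - (DV p c \<bullet> nu p) / (norm (V p))\<^sup>2)) (at p)"
proof -
  have n0: "norm (V p) \<noteq> 0" using V_ne[OF assms] by simp
  have "((\<lambda>p. inverse (norm (V p))) has_derivative (\<lambda>c. - (inverse (norm (V p)) * (DV p c \<bullet> nu p) * inverse (norm (V p))))) (at p)"
    by (rule Deriv.has_derivative_inverse[OF n0 norm_der[OF assms]])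
  then show ?thesis by (simp add: divide_inverse power2_eq_square mult.commute mult.left_commute)
qed

lemma nu_der: assumes "p \<in> Om" shows "(nu has_derivative Dnu p) (at p)"
proof -
  have n0: "norm (V p) \<noteq> 0" using V_ne[OF assms] by simp
  have "((\<lambda>p. inverse (norm (V p)) *\<^sub>R V p) has_derivative
     (\<lambda>c. inverse (norm (V p)) *\<^sub>R DV p c + (- (inverse (norm (V p)) * (DV p c \<bullet> nu p) * inverse (norm (V p)))) *\<^sub>R V p)) (at p)"
    by (rule has_derivative_scaleR[OF Deriv.has_derivative_inverse[OF n0 norm_der[OF assms]] V_der[OF assms]])
  moreover have "nu = (\<lambda>p. inverse (norm (V p)) *\<^sub>R V p)" by (simp add: nu_def[abs_def] divide_inverse_commute)
  moreover have "(\<lambda>c. inverse (norm (V p)) *\<^sub>R DV p c + (- (inverse (norm (V p)) * (DV p c \<bullet> nu p) * inverse (norm (V p)))) *\<^sub>R V p) = Dnu p"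
    using n0 by (auto simp: Dnu_def nu_def fun_eq_iff algebra_simps divide_inverse_commute)
  ultimately show ?thesis by simp
qed

lemma nu_norm: "p \<in> Om \<Longrightarrow> nu p \<bullet> nu p = 1"
  using V_ne by (simp add: nu_def inner_commute power2_eq_square[symmetric] dot_square_norm)

lemma nu_Dnu: assumes "p \<in> Om" shows "nu p \<bullet> Dnu p c = 0"
  using nu_norm[OF assms] by (simp add: Dnu_def inner_diff_right inner_commute)

definition "divnu p = (\<Sum>b\<in>Basis. Dnu p b \<bullet> b)"

lemma divV_split: assumes "p \<in> Om"
  shows "divV p = norm (V p) * divnu p + DV p (nu p) \<bullet> nu p"
proof -
  have n0: "norm (V p) \<noteq> 0" using V_ne[OF assms] by simp
  have "DV p (nu p) = DV p (\<Sum>b\<in>Basis. (nu p \<bullet> b) *\<^sub>R b)" by (simp add: euclidean_representation)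
  also have "\<dots> = (\<Sum>b\<in>Basis. (nu p \<bullet> b) *\<^sub>R DV p b)"
    using linDV[OF assms] by (simp add: linear_sum linear_scale)
  finally have e: "DV p (nu p) \<bullet> nu p = (\<Sum>b\<in>Basis. (DV p b \<bullet> nu p) * (nu p \<bullet> b))"
    by (simp add: inner_sum_left mult.commute)
  have "norm (V p) * divnu p = (\<Sum>b\<in>Basis. DV p b \<bullet> b - (DV p b \<bullet> nu p) * (nu p \<bullet> b))"
    unfolding divnu_def Dnu_def sum_distrib_left
    by (rule sum.cong[OF refl]) (use n0 in \<open>simp add: inner_diff_left field_simps\<close>)
  also have "\<dots> = divV p - DV p (nu p) \<bullet> nu p"
    by (simp add: e divV_def sum_subtractf)
  finally show ?thesis by simp
qed

lemma invertible_inv: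
  fixes M :: "real^'n::finite^'n"
  assumes "invertible M" shows "M ** matrix_inv M = mat 1" "matrix_inv M ** M = mat 1"
proof -
  have "\<exists>M'. M ** M' = mat 1 \<and> M' ** M = mat 1" using assms by (simp add: invertible_def)
  then have "M ** matrix_inv M = mat 1 \<and> matrix_inv M ** M = mat 1"
    unfolding matrix_inv_def by (rule someI_ex)
  then show "M ** matrix_inv M = mat 1" "matrix_inv M ** M = mat 1" by auto
qed

lemma A_x0: assumes "q \<in> D" shows "A q (x, 0) = (\<Sum>j\<in>UNIV. x$j *\<^sub>R dx Phi j q)"
proof -
  have "(x, 0::real) = (\<Sum>j\<in>UNIV. x$j *\<^sub>R (axis j 1, 0))"
    using basis_expansion[of x] by (simp add: sum_prod scaleR_prod_def scalar_mult_eq_scaleR)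
  then have "A q (x, 0) = A q (\<Sum>j\<in>UNIV. x$j *\<^sub>R (axis j 1, 0))" by simp
  also have "\<dots> = (\<Sum>j\<in>UNIV. x$j *\<^sub>R dx Phi j q)"
    by (simp only: linear_sum[OF linA[OF assms]] linear_scale[OF linA[OF assms]] dx_A)
  finally show ?thesis .
qed

lemma first_ff_inv: assumes "q \<in> D" shows "invertible (first_ff Phi q)"
proof -
  have "x = 0" if "first_ff Phi q *v x = 0" for x
  proof -
    define y where "y = (\<Sum>j\<in>UNIV. x$j *\<^sub>R dx Phi j q)"
    have "first_ff Phi q *v x = (\<chi> i. dx Phi i q \<bullet> y)"
      by (simp add: first_ff_def matrix_vector_mult_def y_def inner_sum_right vec_eq_iff mult.commute)
    then have "x \<bullet> (first_ff Phi q *v x) = (\<Sum>i\<in>UNIV. x$i * (dx Phi i q \<bullet> y))"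
      by (simp add: inner_vec_def)
    also have "\<dots> = (\<Sum>i\<in>UNIV. x$i *\<^sub>R dx Phi i q) \<bullet> y"
      by (simp add: inner_sum_left)
    finally have "x \<bullet> (first_ff Phi q *v x) = y \<bullet> y" by (simp add: y_def)
    then have "y = 0" using that by simp
    then have "A q (x, 0) = 0" using A_x0[OF assms] y_def by simp
    then have "L (Phi q) (A q (x, 0)) = 0" using linL[OF Phi_Om[OF assms]] linear_0 by auto
    then show "x = 0" using LA[OF assms] by (simp add: zero_prod_def)
  qed
  then show ?thesis
    using matrix_left_invertible_ker invertible_left_inverse by blast
qed

lemma N_der: assumes "q \<in> D" shows "((\<lambda>q. nu (Phi q)) has_derivative (Dnu (Phi q) \<circ> A q)) (at q)"
  using diff_chain_at[OF Phi_der[OF assms] nu_der[OF Phi_Om[OF assms]]] by (simp add: comp_def)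

lemma Nvec_nu: "q \<in> D \<Longrightarrow> Nvec Phi q = nu (Phi q)"
  by (simp add: Nvec_eq nu_def)

lemma linDnu: "p \<in> Om \<Longrightarrow> linear (Dnu p)"
  using nu_der has_derivative_linear by blast

lemma basis_e: "(axis i 1, 0) \<in> (Basis :: ((real^'m) \<times> real) set)"
  by (auto simp: Basis_prod_def Basis_vec_def)

lemma dx_der: assumes "q \<in> D" shows "(dx Phi l has_derivative (\<lambda>h. pd (dx Phi l) h q)) (at q)"
proof -
  have e: "dx Phi l = pd Phi (axis l 1, 0)" by (simp add: dx_def[abs_def])
  have "pd Phi (axis l 1, 0) differentiable (at q)"
    using C2 assms basis_e unfolding C2_on_def by blast
  then show ?thesis unfolding e by (rule pd_works)
qed

lemma orth: assumes "q \<in> D"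
  shows "Dnu (Phi q) (A q (axis i 1, 0)) \<bullet> dx Phi l q = - (second_ff Phi q $ i $ l)"
proof -
  have "((\<lambda>q. nu (Phi q) \<bullet> dx Phi l q) has_derivative
     (\<lambda>h. nu (Phi q) \<bullet> pd (dx Phi l) h q + (Dnu (Phi q) \<circ> A q) h \<bullet> dx Phi l q)) (at q)"
    by (rule has_derivative_inner[OF N_der[OF assms] dx_der[OF assms]])
  moreover have "nu (Phi y) \<bullet> dx Phi l y = 0" if "y \<in> D" for y
    using nvec_dx[of y l] by (simp add: Nvec_nu[OF that, symmetric] Nvec_def)
  ultimately have "(\<lambda>h. nu (Phi q) \<bullet> pd (dx Phi l) h q + (Dnu (Phi q) \<circ> A q) h \<bullet> dx Phi l q) = (\<lambda>_. 0)"
    using deriv_loc_const[OF _ D_open assms] by blast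
  then have "nu (Phi q) \<bullet> pd (dx Phi l) (axis i 1, 0) q + Dnu (Phi q) (A q (axis i 1, 0)) \<bullet> dx Phi l q = 0"
    by (metis comp_apply)
  then show ?thesis
    by (simp add: second_ff_def Nvec_nu[OF assms] inner_commute)
qed

lemma Lw_snd: assumes "q \<in> D" shows "snd (L (Phi q) (Dnu (Phi q) w)) = 0"
proof -
  have "V (Phi q) = norm (V (Phi q)) *\<^sub>R nu (Phi q)"
    using V_ne[OF Phi_Om[OF assms]] by (simp add: nu_def)
  then have "V (Phi q) \<bullet> Dnu (Phi q) w = 0"
    using nu_Dnu[OF Phi_Om[OF assms]] by (metis inner_scaleR_left mult_zero_right)
  then show ?thesis using Vdot[OF Phi_Om[OF assms]] by simp
qed

lemma w_expand: assumes "q \<in> D"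
  shows "Dnu (Phi q) w = (\<Sum>j\<in>UNIV. fst (L (Phi q) (Dnu (Phi q) w)) $ j *\<^sub>R dx Phi j q)"
proof -
  have "L (Phi q) (Dnu (Phi q) w) = (fst (L (Phi q) (Dnu (Phi q) w)), 0)"
    using Lw_snd[OF assms] by (metis prod.collapse)
  then have "Dnu (Phi q) w = A q (fst (L (Phi q) (Dnu (Phi q) w)), 0)"
    using AL'[OF assms, of "Dnu (Phi q) w"] by metis
  then show ?thesis by (simp add: A_x0[OF assms])
qed

lemma divnu_H: assumes "q \<in> D" shows "divnu (Phi q) = - real CARD('m) * Hcurv Phi q"
proof -
  let ?p = "Phi q"
  define w where "w i = Dnu ?p (A q (axis i 1, 0))" for i
  define \<beta> where "\<beta> = (\<chi> i j. fst (L ?p (w i)) $ j)"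
  let ?g = "first_ff Phi q" and ?h = "second_ff Phi q"
  have pOm: "?p \<in> Om" using assms by simp
  have bg: "(- \<beta>) ** ?g = ?h"
  proof -
    have "((- \<beta>) ** ?g) $ i $ l = ?h $ i $ l" for i l
    proof -
      define c where "c = fst (L ?p (w i))"
      have "w i = (\<Sum>j\<in>UNIV. c$j *\<^sub>R dx Phi j q)"
        unfolding c_def w_def by (rule w_expand[OF assms])
      then have "w i \<bullet> dx Phi l q = (\<Sum>j\<in>UNIV. c $ j * (dx Phi j q \<bullet> dx Phi l q))"
        by (simp add: inner_sum_left)
      then have "w i \<bullet> dx Phi l q = (\<Sum>j\<in>UNIV. \<beta> $ i $ j * (dx Phi j q \<bullet> dx Phi l q))"
        by (simp add: c_def \<beta>_def)
      then show ?thesis using orth[OF assms, of i l]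
        by (simp add: matrix_matrix_mult_def first_ff_def w_def sum_negf)
    qed
    then show ?thesis by (simp add: vec_eq_iff)
  qed
  have ginv: "?g ** matrix_inv ?g = mat 1" using invertible_inv(1)[OF first_ff_inv[OF assms]] .
  have "- \<beta> = ?h ** matrix_inv ?g"
    by (metis bg ginv matrix_mul_assoc matrix_mul_rid)
  then have tb: "trace (- \<beta>) = trace (matrix_inv ?g ** ?h)" by (metis trace_mul_sym)
  have "divnu ?p = (\<Sum>b\<in>Basis. (Dnu ?p \<circ> A q) (L ?p b) \<bullet> b)"
    by (simp add: divnu_def AL'[OF assms])
  also have "\<dots> = (\<Sum>k\<in>Basis. L ?p ((Dnu ?p \<circ> A q) k) \<bullet> k)"
    by (rule trace_swap[OF linL[OF pOm] linear_compose[OF linA[OF assms] linDnu[OF pOm]]])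
  also have "\<dots> = (\<Sum>i\<in>UNIV. \<beta> $ i $ i)"
    using Lw_snd[OF assms]
    by (simp add: sum_Basis_param \<beta>_def w_def inner_axis inner_prod_def)
  also have "\<dots> = - trace (- \<beta>)" by (simp add: trace_def sum_negf)
  finally show ?thesis using tb by (simp add: Hcurv_def)
qed

definition "Gf q = ds_phi D Phi q + real CARD('m) * Hcurv Phi q * phi Phi q"

lemma ds_eq: assumes "q \<in> D"
  shows "ds_phi D Phi q = - (DV (Phi q) (nu (Phi q)) \<bullet> nu (Phi q)) / (norm (V (Phi q)))\<^sup>2"
proof -
  have e: "1 / norm (V p') = phi Phi (Psi p')" if "p' \<in> Om" for p'
    using phi_eq[OF PhiPsi(1)[OF that]] PhiPsi(2)[OF that] by simp
  have "pd (\<lambda>p. phi Phi (Psi p)) (nu (Phi q)) (Phi q) = - (DV (Phi q) (nu (Phi q)) \<bullet> nu (Phi q)) / (norm (V (Phi q)))\<^sup>2"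
    by (rule pd_transform(2)[OF invnorm_der[OF Phi_Om[OF assms]] opn Phi_Om[OF assms] e])
  then show ?thesis by (simp add: ds_phi_def Nvec_nu[OF assms])
qed

lemma key: assumes "q \<in> D" shows "divV (Phi q) = - (norm (V (Phi q)))\<^sup>2 * Gf q"
proof -
  let ?p = "Phi q"
  have n0: "norm (V ?p) \<noteq> 0" using V_ne[OF Phi_Om[OF assms]] by simp
  have "divV ?p = norm (V ?p) * divnu ?p + DV ?p (nu ?p) \<bullet> nu ?p"
    by (rule divV_split[OF Phi_Om[OF assms]])
  also have "\<dots> = - (norm (V ?p))\<^sup>2 * Gf q"
    using n0 unfolding Gf_def ds_eq[OF assms] divnu_H[OF assms] phi_eq[OF assms]
    by (simp add: field_simps power2_eq_square)
  finally show ?thesis .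
qed

lemma tau_der: assumes "p \<in> Om" shows "(tau has_derivative (\<lambda>w. V p \<bullet> w)) (at p)"
proof -
  have "(tau has_derivative (\<lambda>w. snd (L p w))) (at p)"
    unfolding tau_def[abs_def] by (rule has_derivative_snd[OF Psi_der[OF assms]])
  then show ?thesis by (simp add: Vdot[OF assms])
qed

lemma tau_Phi: "q \<in> D \<Longrightarrow> tau (Phi q) = snd q"
  by (simp add: tau_def PsiPhi)

lemma tau_J: "p \<in> Om \<Longrightarrow> tau p \<in> J"
  using PhiPsi(1) unfolding tau_def by (metis SigmaE snd_conv)

lemma tau_cont: "continuous_on Om tau"
  by (rule continuous_at_imp_continuous_on) (blast intro: has_derivative_continuous tau_der)

lemma V_sq: "(\<Sum>b\<in>Basis. (V p \<bullet> b) * (V p \<bullet> b)) = (norm (V p))\<^sup>2"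
  by (simp add: euclidean_inner[symmetric] dot_square_norm)

context
  fixes f f1 f2 :: "real \<Rightarrow> real" and F :: "real^('m option) \<Rightarrow> real"
  assumes f1: "\<And>t. t \<in> J \<Longrightarrow> (f has_real_derivative f1 t) (at t)"
  and f2: "\<And>t. t \<in> J \<Longrightarrow> (f1 has_real_derivative f2 t) (at t)"
  and F: "\<And>p. p \<in> Om \<Longrightarrow> F p = f (tau p)"
begin

lemma F_der: assumes "p \<in> Om" shows "(F has_derivative (\<lambda>w. f1 (tau p) * (V p \<bullet> w))) (at p)"
proof -
  have "(f \<circ> tau has_derivative ((*) (f1 (tau p)) \<circ> (\<lambda>w. V p \<bullet> w))) (at p)"
    by (rule diff_chain_at[OF tau_der[OF assms]])
      (use f1[OF tau_J[OF assms]] in \<open>simp add: has_field_derivative_def\<close>)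
  then have "((\<lambda>p. f (tau p)) has_derivative (\<lambda>w. f1 (tau p) * (V p \<bullet> w))) (at p)"
    by (simp add: comp_def)
  then show ?thesis
    by (rule has_derivative_transform_within_open[OF _ opn assms]) (simp add: F)
qed

lemma pdF: "p \<in> Om \<Longrightarrow> pd F b p = f1 (tau p) * (V p \<bullet> b)"
  using pd_eqI[OF F_der] by blast

lemma f1tau_der: assumes "p \<in> Om"
  shows "((\<lambda>p. f1 (tau p)) has_derivative (\<lambda>c. f2 (tau p) * (V p \<bullet> c))) (at p)"
proof -
  have "(f1 \<circ> tau has_derivative ((*) (f2 (tau p)) \<circ> (\<lambda>w. V p \<bullet> w))) (at p)"
    by (rule diff_chain_at[OF tau_der[OF assms]])
      (use f2[OF tau_J[OF assms]] in \<open>simp add: has_field_derivative_def\<close>)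
  then show ?thesis by (simp add: comp_def)
qed

lemma pdF_der: assumes "p \<in> Om"
  shows "(pd F b has_derivative (\<lambda>c. f2 (tau p) * (V p \<bullet> c) * (V p \<bullet> b) + f1 (tau p) * (DV p c \<bullet> b))) (at p)"
proof -
  have Vb: "((\<lambda>p. V p \<bullet> b) has_derivative (\<lambda>c. DV p c \<bullet> b)) (at p)"
    by (rule bounded_linear.has_derivative[OF bounded_linear_inner_left V_der[OF assms]])
  have "((\<lambda>p. f1 (tau p) * (V p \<bullet> b)) has_derivative
      (\<lambda>c. f1 (tau p) * (DV p c \<bullet> b) + f2 (tau p) * (V p \<bullet> c) * (V p \<bullet> b))) (at p)"
    using has_derivative_mult[OF f1tau_der[OF assms] Vb] by (simp add: mult.assoc)
  then have "((\<lambda>p. f1 (tau p) * (V p \<bullet> b)) has_derivative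
      (\<lambda>c. f2 (tau p) * (V p \<bullet> c) * (V p \<bullet> b) + f1 (tau p) * (DV p c \<bullet> b))) (at p)"
    by (simp add: add.commute)
  then show ?thesis
    by (rule has_derivative_transform_within_open[OF _ opn assms]) (simp add: pdF)
qed

lemma pdpdF: "p \<in> Om \<Longrightarrow> pd (pd F b) c p = f2 (tau p) * (V p \<bullet> c) * (V p \<bullet> b) + f1 (tau p) * (DV p c \<bullet> b)"
  using pd_eqI[OF pdF_der] by blast

lemma lapF: assumes "q \<in> D"
  shows "(\<Sum>b\<in>Basis. pd (pd F b) b (Phi q)) = (norm (V (Phi q)))\<^sup>2 * (f2 (snd q) - f1 (snd q) * Gf q)"
proof -
  have "(\<Sum>b\<in>Basis. pd (pd F b) b (Phi q)) =
     f2 (snd q) * (\<Sum>b\<in>Basis. (V (Phi q) \<bullet> b) * (V (Phi q) \<bullet> b)) + f1 (snd q) * divV (Phi q)"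
    using assms by (simp add: pdpdF tau_Phi sum.distrib sum_distrib_left divV_def mult.assoc)
  then show ?thesis by (simp add: V_sq key[OF assms] algebra_simps)
qed

lemma F_C2:
  assumes f2c: "continuous_on J f2"
  shows "C2_on Om F"
  unfolding C2_on_def
proof (intro conjI ballI)
  fix p assume "p \<in> Om" then show "F differentiable at p" using F_der by (auto simp: differentiable_def)
next
  fix b p assume "p \<in> Om" then show "pd F b differentiable at p" using pdF_der[of p b] unfolding differentiable_def by blast
next
  fix b c :: "real^('m option)" assume b: "b \<in> Basis" and c: "c \<in> Basis"
  have f1c: "continuous_on J f1"
    by (rule continuous_at_imp_continuous_on) (use f2 DERIV_isCont in blast)
  have c1: "continuous_on Om (\<lambda>p. f2 (tau p))"
    by (rule continuous_on_compose2[OF f2c tau_cont]) (use tau_J in blast)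
  have c2: "continuous_on Om (\<lambda>p. f1 (tau p))"
    by (rule continuous_on_compose2[OF f1c tau_cont]) (use tau_J in blast)
  have c3: "continuous_on Om (\<lambda>p. snd (pd (pd Psi b) c p))"
    using C2inv b c unfolding C2_on_def by (blast intro: continuous_on_snd)
  have "continuous_on Om (\<lambda>p. f2 (tau p) * (V p \<bullet> c) * (V p \<bullet> b) + f1 (tau p) * snd (pd (pd Psi b) c p))"
    by (intro continuous_intros c1 c2 c3 V_cont)
  then show "continuous_on Om (pd (pd F b) c)"
    by (rule continuous_on_eq) (simp add: pdpdF DV_dot[OF b])
qed

end

lemma Phi_cont: "continuous_on D Phi"
  by (rule continuous_at_imp_continuous_on) (blast intro: has_derivative_continuous Phi_der)

lemma Gf_alt: "q \<in> D \<Longrightarrow> Gf q = - divV (Phi q) / (norm (V (Phi q)))\<^sup>2"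
  using key[of q] V_ne[OF Phi_Om, of q] by (simp add: field_simps)

lemma Gf_cont: "continuous_on D Gf"
proof -
  have c1: "continuous_on D (\<lambda>q. divV (Phi q))"
    by (rule continuous_on_compose2[OF divV_cont Phi_cont]) auto
  have c2: "continuous_on D (\<lambda>q. V (Phi q))"
    by (rule continuous_on_compose2[OF V_cont Phi_cont]) auto
  have "continuous_on D (\<lambda>q. - divV (Phi q) / (norm (V (Phi q)))\<^sup>2)"
    by (intro continuous_intros c1 c2) (use V_ne[OF Phi_Om] in auto)
  then show ?thesis by (rule continuous_on_eq) (simp add: Gf_alt)
qed

lemma tau_Om: "tau ` Om = J"
proof
  show "tau ` Om \<subseteq> J" using tau_J by blast
  show "J \<subseteq> tau ` Om"
  proof
    fix t assume "t \<in> J"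
    then have "(0, t) \<in> D" by simp
    then show "t \<in> tau ` Om" using tau_Phi[of "(0,t)"] by (metis Phi_Om image_eqI snd_conv)
  qed
qed

lemma level_char:
  assumes "inj_on f J" "t \<in> J"
  shows "{p \<in> Om. f (tau p) = f t} = Phi ` (UNIV \<times> {t})"
proof
  show "{p \<in> Om. f (tau p) = f t} \<subseteq> Phi ` (UNIV \<times> {t})"
  proof
    fix p assume p: "p \<in> {p \<in> Om. f (tau p) = f t}"
    then have "tau p = t" using assms tau_J[of p] by (auto dest: inj_onD)
    moreover have "Psi p \<in> D" "Phi (Psi p) = p" using p PhiPsi by auto
    ultimately have "Psi p = (fst (Psi p), t)" "p = Phi (Psi p)" by (simp_all add: tau_def prod_eq_iff)
    then have "p = Phi (fst (Psi p), t)" by simp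
    moreover have "(fst (Psi p), t) \<in> UNIV \<times> {t}" by simp
    ultimately show "p \<in> Phi ` (UNIV \<times> {t})" by (rule image_eqI)
  qed
  show "Phi ` (UNIV \<times> {t}) \<subseteq> {p \<in> Om. f (tau p) = f t}"
  proof
    fix p assume "p \<in> Phi ` (UNIV \<times> {t})"
    then obtain x where x: "p = Phi (x, t)" by blast
    have xD: "(x, t) \<in> D" using assms(2) by simp
    then have "p \<in> Om" using x by blast
    moreover have "tau p = t" using tau_Phi[OF xD] x by simp
    ultimately show "p \<in> {p \<in> Om. f (tau p) = f t}" by simp
  qed
qed

lemma level_sets_eq:
  assumes "inj_on f J"
  shows "level_sets Om (\<lambda>p. f (tau p)) = {Phi ` (UNIV \<times> {t}) | t. t \<in> J}"
proof -
  have "level_sets Om (\<lambda>p. f (tau p)) = {{p \<in> Om. f (tau p) = f t} | t. t \<in> J}"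
    unfolding level_sets_def
  proof (intro equalityI subsetI)
    fix X assume "X \<in> {{p \<in> Om. f (tau p) = c} |c. c \<in> (\<lambda>p. f (tau p)) ` Om}"
    then obtain c where c: "c \<in> (\<lambda>p. f (tau p)) ` Om" "X = {p \<in> Om. f (tau p) = c}"
      by (rule setcompr_elim)
    from c(1) obtain p0 where p0: "p0 \<in> Om" "c = f (tau p0)" by (rule imageE)
    have "tau p0 \<in> J" by (rule tau_J[OF p0(1)])
    then show "X \<in> {{p \<in> Om. f (tau p) = f t} | t. t \<in> J}" using c(2) p0(2) by blast
  next
    fix X assume "X \<in> {{p \<in> Om. f (tau p) = f t} | t. t \<in> J}"
    then obtain t where t: "t \<in> J" "X = {p \<in> Om. f (tau p) = f t}" by (rule setcompr_elim)
    have "t \<in> tau ` Om" using t(1) tau_Om by simp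
    then obtain p0 where p0: "p0 \<in> Om" "t = tau p0" by (rule imageE)
    then have "f t \<in> (\<lambda>p. f (tau p)) ` Om" by simp
    then show "X \<in> {{p \<in> Om. f (tau p) = c} |c. c \<in> (\<lambda>p. f (tau p)) ` Om}" using t(2) by blast
  qed
  also have "\<dots> = {Phi ` (UNIV \<times> {t}) | t. t \<in> J}"
    by (rule setcompr_cong) (rule level_char[OF assms])
  finally show ?thesis .
qed

lemma inj_incr:
  fixes F :: "real \<Rightarrow> real"
  assumes "\<And>t. t \<in> J \<Longrightarrow> \<exists>y. DERIV F t :> y \<and> y > 0"
  shows "inj_on F J"
proof -
  have lt: "F a < F b" if "a \<in> J" "b \<in> J" "a < b" for a b
    by (rule DERIV_pos_imp_increasing[OF that(3)]) (use that assms in auto)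
  show ?thesis
  proof (rule inj_onI)
    fix a b assume "a \<in> J" "b \<in> J" "F a = F b"
    then show "a = b" using lt[of a b] lt[of b a] by (cases a b rule: linorder_cases) auto
  qed
qed

lemma suff:
  assumes H: "\<forall>t\<in>J. \<forall>x y. Gf (x,t) = Gf (y,t)"
  shows "\<exists>U. harmonic_on Om U \<and> (\<forall>p\<in>Om. frechet_derivative U (at p) \<noteq> (\<lambda>v. 0))
           \<and> level_sets Om U = {Phi ` (UNIV \<times> {t}) | t. t \<in> J}"
proof -
  define g where "g t = Gf (0, t)" for t
  have gc: "continuous_on J g"
    unfolding g_def
  proof (rule continuous_on_compose2[OF Gf_cont, of J "\<lambda>t. (0, t)"])
    show "continuous_on J (\<lambda>t. (0::real^'m, t))" by (intro continuous_intros)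
    show "(\<lambda>t. (0::real^'m, t)) ` J \<subseteq> D" by auto
  qed
  have isc: "isCont g x" if "x \<in> J" for x
    using gc that continuous_on_eq_continuous_at[of J g] by auto
  obtain F1 where F1v: "\<And>x::real. ereal (-eps) < x \<Longrightarrow> x < ereal eps \<Longrightarrow> (F1 has_vector_derivative g x) (at x)"
    using einterval_antiderivative[of "ereal (-eps)" "ereal eps" g] isc eps by auto
  have F1: "(F1 has_real_derivative g t) (at t)" if "t \<in> J" for t
    using F1v[of t] that by (simp add: has_real_derivative_iff_has_vector_derivative)
  have F1c: "isCont F1 t" if "t \<in> J" for t using F1[OF that] DERIV_isCont by blast
  obtain F2 where F2v: "\<And>x::real. ereal (-eps) < x \<Longrightarrow> x < ereal eps \<Longrightarrow> (F2 has_vector_derivative exp (F1 x)) (at x)"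
    using einterval_antiderivative[of "ereal (-eps)" "ereal eps" "\<lambda>t. exp (F1 t)"] F1c eps
    by (auto intro!: continuous_intros)
  have F2: "(F2 has_real_derivative exp (F1 t)) (at t)" if "t \<in> J" for t
    using F2v[of t] that by (simp add: has_real_derivative_iff_has_vector_derivative)
  have E: "((\<lambda>t. exp (F1 t)) has_real_derivative exp (F1 t) * g t) (at t)" if "t \<in> J" for t
    by (rule DERIV_fun_exp[OF F1[OF that]])
  have f2c: "continuous_on J (\<lambda>t. exp (F1 t) * g t)"
  proof -
    have "continuous_on J F1" using F1c continuous_at_imp_continuous_on by blast
    then show ?thesis by (intro continuous_intros gc)
  qed
  define U where "U p = F2 (tau p)" for p
  have Ueq: "\<And>p. p \<in> Om \<Longrightarrow> U p = F2 (tau p)" by (simp add: U_def)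
  have C2U: "C2_on Om U" by (rule F_C2[OF F2 E Ueq f2c])
  have lap: "(\<Sum>b\<in>Basis. pd (pd U b) b p) = 0" if "p \<in> Om" for p
  proof -
    define q where "q = Psi p"
    have qD: "q \<in> D" and pq: "p = Phi q" using PhiPsi[OF that] by (auto simp: q_def)
    have "Gf (0, snd q) = Gf (fst q, snd q)" using H qD by (metis mem_Sigma_iff prod.collapse)
    then have "Gf (0, snd q) = Gf q" by simp
    then show ?thesis using lapF[OF F2 E Ueq qD] by (simp add: pq g_def)
  qed
  have crit: "frechet_derivative U (at p) \<noteq> (\<lambda>v. 0)" if "p \<in> Om" for p
  proof
    assume a: "frechet_derivative U (at p) = (\<lambda>v. 0)"
    have "frechet_derivative U (at p) = (\<lambda>w. exp (F1 (tau p)) * (V p \<bullet> w))"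
      using frechet_derivative_at[OF F_der[OF F2 E Ueq that]] by simp
    then have "exp (F1 (tau p)) * (V p \<bullet> V p) = 0" using a by metis
    then show False using V_ne[OF that] by simp
  qed
  have injF2: "inj_on F2 J"
  proof (rule inj_incr)
    fix t assume "t \<in> J"
    then show "\<exists>y. DERIV F2 t :> y \<and> y > 0"
      by (intro exI[of _ "exp (F1 t)"] conjI F2 exp_gt_zero)
  qed
  have "level_sets Om U = {Phi ` (UNIV \<times> {t}) | t. t \<in> J}"
    unfolding U_def by (rule level_sets_eq[OF injF2])
  then show ?thesis using C2U lap crit unfolding harmonic_on_def by blast
qed


lemma nec:
  assumes U: "harmonic_on Om U" and crit: "\<forall>p\<in>Om. frechet_derivative U (at p) \<noteq> (\<lambda>v. 0)"
    and lev: "level_sets Om U = {Phi ` (UNIV \<times> {t}) | t. t \<in> J}"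
  shows "\<forall>t\<in>J. \<forall>x y. Gf (x,t) = Gf (y,t)"
proof -
  have C2U: "C2_on Om U" using U by (simp add: harmonic_on_def)
  have Udiff: "U differentiable at p" if "p \<in> Om" for p using C2U that unfolding C2_on_def by blast
  have pdUdiff: "pd U b differentiable at p" if "p \<in> Om" "b \<in> Basis" for p b
    using C2U that unfolding C2_on_def by blast
  define f where "f t = U (Phi (0, t))" for t
  have Ueq: "U p = f (tau p)" if p: "p \<in> Om" for p
  proof -
    have "{p' \<in> Om. U p' = U p} \<in> level_sets Om U" unfolding level_sets_def using p by blast
    then have "{p' \<in> Om. U p' = U p} \<in> {Phi ` (UNIV \<times> {t}) | t. t \<in> J}" using lev by simp
    then obtain t' where t': "t' \<in> J" "{p' \<in> Om. U p' = U p} = Phi ` (UNIV \<times> {t'})"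
      by (rule setcompr_elim)
    have "p \<in> Phi ` (UNIV \<times> {t'})" using t'(2) p by blast
    then obtain x' where x': "p = Phi (x', t')" by blast
    have "(x', t') \<in> D" using t'(1) by simp
    then have tp: "tau p = t'" using tau_Phi x' by simp
    have "Phi (0, t') \<in> Phi ` (UNIV \<times> {t'})" by blast
    then have "U (Phi (0, t')) = U p" using t'(2) by blast
    then show ?thesis by (simp add: f_def tp)
  qed
  define f1 where "f1 t = frechet_derivative U (at (Phi (0, t))) (A (0, t) (0, 1))" for t
  have emb: "((\<lambda>t. (0::real^'m, t)) has_derivative (\<lambda>h. (0, h))) (at t)" for t
    by (intro derivative_eq_intros) auto
  have fder: "(f has_real_derivative f1 t) (at t)" if t: "t \<in> J" for t
  proof -
    have tD: "(0, t) \<in> D" using t by simp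
    have dU: "(U has_derivative frechet_derivative U (at (Phi (0, t)))) (at (Phi (0, t)))"
      using Udiff[OF Phi_Om[OF tD]] frechet_derivative_works by blast
    have "((U \<circ> (Phi \<circ> (\<lambda>t. (0::real^'m, t)))) has_derivative
        (frechet_derivative U (at (Phi (0, t))) \<circ> (A (0, t) \<circ> (\<lambda>h. (0, h))))) (at t)"
      by (rule diff_chain_at[OF diff_chain_at[OF emb Phi_der[OF tD]]]) (use dU in simp)
    then have d: "(f has_derivative (frechet_derivative U (at (Phi (0, t))) \<circ> (A (0, t) \<circ> (\<lambda>h. (0, h))))) (at t)"
      by (simp add: f_def[abs_def] comp_def)
    show ?thesis
    proof (rule has_derivative_imp_has_field_derivative[OF d])
      fix h :: real
      have "(0::real^'m, h) = h *\<^sub>R (0, 1)" by simp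
      then have "A (0, t) (0, h) = h *\<^sub>R A (0, t) (0, 1)" using linear_scale[OF linA[OF tD]] by metis
      moreover have "linear (frechet_derivative U (at (Phi (0, t))))" using dU has_derivative_linear by blast
      ultimately show "h * f1 t = (frechet_derivative U (at (Phi (0, t))) \<circ> (A (0, t) \<circ> (\<lambda>h. (0, h)))) h"
        by (simp add: f1_def linear_scale)
    qed
  qed
  have f1diff: "f1 differentiable at t" if t: "t \<in> J" for t
  proof -
    have tD: "(0, t) \<in> D" using t by simp
    have ex: "(\<Sum>b\<in>Basis. (pd Phi (0, 1) (0, s) \<bullet> b) * pd U b (Phi (0, s))) = f1 s" if sJ: "s \<in> J" for s
    proof -
      have sD: "(0, s) \<in> D" using sJ by simp
      have linU: "linear (frechet_derivative U (at (Phi (0, s))))"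
        using Udiff[OF Phi_Om[OF sD]] frechet_derivative_works has_derivative_linear by blast
      have "frechet_derivative U (at (Phi (0, s))) (A (0, s) (0, 1)) =
          frechet_derivative U (at (Phi (0, s))) (\<Sum>b\<in>Basis. (A (0, s) (0, 1) \<bullet> b) *\<^sub>R b)"
        by (simp add: euclidean_representation)
      also have "\<dots> = (\<Sum>b\<in>Basis. (A (0, s) (0, 1) \<bullet> b) * frechet_derivative U (at (Phi (0, s))) b)"
        by (simp add: linear_sum[OF linU] linear_scale[OF linU])
      finally show ?thesis by (simp add: f1_def pd_def A_def)
    qed
    have embd: "(\<lambda>t. (0::real^'m, t)) differentiable at t" using emb by (auto simp: differentiable_def)
    have "(\<lambda>s. pd Phi (0, 1) (0, s) \<bullet> b * pd U b (Phi (0, s))) differentiable at t" if b: "b \<in> Basis" for b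
    proof -
      have b01: "(0, 1) \<in> (Basis :: ((real^'m) \<times> real) set)" by (simp add: Basis_prod_def)
      have "pd Phi (0, 1) differentiable at (0, t)" using C2 tD b01 unfolding C2_on_def by blast
      then have h1: "(\<lambda>s. pd Phi (0, 1) (0, s)) differentiable at t"
        by (rule differentiable_compose[OF _ embd])
      have "Phi differentiable at (0, t)" using Phi_der[OF tD] by (auto simp: differentiable_def)
      then have "(\<lambda>s. Phi (0, s)) differentiable at t" by (rule differentiable_compose[OF _ embd])
      then have h2: "(\<lambda>s. pd U b (Phi (0, s))) differentiable at t"
        by (rule differentiable_compose[where f="pd U b" and g="\<lambda>s. Phi (0, s)", OF pdUdiff[OF Phi_Om[OF tD] b]])
      show ?thesis by (intro differentiable_mult differentiable_inner h1 h2 differentiable_const)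
    qed
    then have "(\<lambda>s. \<Sum>b\<in>Basis. (pd Phi (0, 1) (0, s) \<bullet> b) * pd U b (Phi (0, s))) differentiable at t"
      by (intro differentiable_sum) auto
    then obtain Df where "((\<lambda>s. \<Sum>b\<in>Basis. (pd Phi (0, 1) (0, s) \<bullet> b) * pd U b (Phi (0, s))) has_derivative Df) (at t)"
      by (auto simp: differentiable_def)
    then have "(f1 has_derivative Df) (at t)"
      by (rule has_derivative_transform_within_open[of _ _ _ _ J]) (use t ex in auto)
    then show ?thesis by (auto simp: differentiable_def)
  qed
  define f2 where "f2 t = deriv f1 t" for t
  have f2: "(f1 has_real_derivative f2 t) (at t)" if "t \<in> J" for t
    using f1diff[OF that] DERIV_deriv_iff_real_differentiable f2_def by metis
  have key2: "Gf q = f2 (snd q) / f1 (snd q)" if qD: "q \<in> D" for q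
  proof -
    have pOm: "Phi q \<in> Om" using qD by simp
    have "(\<Sum>b\<in>Basis. pd (pd U b) b (Phi q)) = 0" using U pOm unfolding harmonic_on_def by blast
    then have "(norm (V (Phi q)))\<^sup>2 * (f2 (snd q) - f1 (snd q) * Gf q) = 0"
      using lapF[OF fder f2 Ueq qD] by simp
    then have e: "f2 (snd q) = f1 (snd q) * Gf q" using V_ne[OF pOm] by simp
    have "frechet_derivative U (at (Phi q)) = (\<lambda>w. f1 (tau (Phi q)) * (V (Phi q) \<bullet> w))"
      using frechet_derivative_at[OF F_der[OF fder f2 Ueq pOm]] by simp
    then have "f1 (snd q) \<noteq> 0" using crit pOm tau_Phi[OF qD] by force
    then show ?thesis using e by simp
  qed
  show ?thesis
  proof (intro ballI allI)
    fix t x y assume "t \<in> J"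
    then have "(x, t) \<in> D" "(y, t) \<in> D" by auto
    then show "Gf (x, t) = Gf (y, t)" using key2 by simp
  qed
qed

end

theorem theorem3:
  fixes Phi :: "(real^'m::finite) \<times> real \<Rightarrow> real^('m option)" and \<epsilon> :: real
  defines "J \<equiv> {-\<epsilon><..<\<epsilon>}"
  defines "D \<equiv> (UNIV :: (real^'m) set) \<times> J"
  defines "\<Omega> \<equiv> Phi ` D"
  assumes eps: "\<epsilon> > 0"
    and C2: "C2_on D Phi"
    and inj: "inj_on Phi D"
    and dom: "open \<Omega>" "connected \<Omega>"
    and C2inv: "C2_on \<Omega> (inv_into D Phi)"
    and orient: "\<forall>q\<in>D. jac_det Phi q > 0"
  shows "(\<exists>U. harmonic_on \<Omega> U \<and> (\<forall>p\<in>\<Omega>. frechet_derivative U (at p) \<noteq> (\<lambda>v. 0))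
              \<and> level_sets \<Omega> U = {Phi ` (UNIV \<times> {t}) | t. t \<in> J})
         \<longleftrightarrow> (\<forall>t\<in>J. \<forall>x y.
               ds_phi D Phi (x, t) + real CARD('m) * Hcurv Phi (x, t) * phi Phi (x, t)
             = ds_phi D Phi (y, t) + real CARD('m) * Hcurv Phi (y, t) * phi Phi (y, t))"
proof -
  interpret S: S3 Phi \<epsilon>
    by unfold_locales (use eps C2 inj dom(1) C2inv orient in \<open>simp_all add: J_def D_def \<Omega>_def\<close>)
  have "(\<exists>U. harmonic_on \<Omega> U \<and> (\<forall>p\<in>\<Omega>. frechet_derivative U (at p) \<noteq> (\<lambda>v. 0))
              \<and> level_sets \<Omega> U = {Phi ` (UNIV \<times> {t}) | t. t \<in> J})
         \<longleftrightarrow> (\<forall>t\<in>J. \<forall>x y. S.Gf (x,t) = S.Gf (y,t))"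
    unfolding \<Omega>_def D_def J_def
  proof
    assume "\<exists>U. harmonic_on (Phi ` (UNIV \<times> {- \<epsilon><..<\<epsilon>})) U \<and>
        (\<forall>p\<in>Phi ` (UNIV \<times> {- \<epsilon><..<\<epsilon>}). frechet_derivative U (at p) \<noteq> (\<lambda>v. 0)) \<and>
        level_sets (Phi ` (UNIV \<times> {- \<epsilon><..<\<epsilon>})) U = {Phi ` (UNIV \<times> {t}) |t. t \<in> {- \<epsilon><..<\<epsilon>}}"
    then obtain U where "harmonic_on (Phi ` (UNIV \<times> {- \<epsilon><..<\<epsilon>})) U"
        "\<forall>p\<in>Phi ` (UNIV \<times> {- \<epsilon><..<\<epsilon>}). frechet_derivative U (at p) \<noteq> (\<lambda>v. 0)"
        "level_sets (Phi ` (UNIV \<times> {- \<epsilon><..<\<epsilon>})) U = {Phi ` (UNIV \<times> {t}) |t. t \<in> {- \<epsilon><..<\<epsilon>}}"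
      by (elim exE conjE)
    then show "\<forall>t\<in>{- \<epsilon><..<\<epsilon>}. \<forall>x y. S.Gf (x, t) = S.Gf (y, t)" by (rule S.nec)
  next
    assume "\<forall>t\<in>{- \<epsilon><..<\<epsilon>}. \<forall>x y. S.Gf (x, t) = S.Gf (y, t)"
    then show "\<exists>U. harmonic_on (Phi ` (UNIV \<times> {- \<epsilon><..<\<epsilon>})) U \<and>
        (\<forall>p\<in>Phi ` (UNIV \<times> {- \<epsilon><..<\<epsilon>}). frechet_derivative U (at p) \<noteq> (\<lambda>v. 0)) \<and>
        level_sets (Phi ` (UNIV \<times> {- \<epsilon><..<\<epsilon>})) U = {Phi ` (UNIV \<times> {t}) |t. t \<in> {- \<epsilon><..<\<epsilon>}}"
      by (rule S.suff)
  qed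
  then show ?thesis unfolding S.Gf_def D_def J_def .
qed

end
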